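(* Let $\Gamma$ be a torsion-free finite index subgroup of $\mathrm{SL}_n\mathbb Z$ and let $N\subset\mathrm{SL}_n\mathbb R$ be a subset (a manifold) such that the map $N\to M_\Gamma$, $x\mapsto[x]$, is proper. Then for every $B\in\mathrm{SL}_n\mathbb R$, the maps $N\to M_\Gamma$, $x\mapsto[x]$ and $x\mapsto[Bx]$, are properly homotopic.
   Context: $S_n=\mathrm{SO}_n\backslash\mathrm{SL}_n\mathbb R$ with the right action of $\mathrm{SL}_n\mathbb R$; $M_\Gamma=\mathrm{SO}_n\backslash\mathrm{SL}_n\mathbb R/\Gamma$ and $[x]$ denotes the image of $x\in\mathrm{SL}_n\mathbb R$ in $M_\Gamma$. A proper homotopy is a homotopy $N\times[0,1]\to M_\Gamma$ that is a proper map. *)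

theory Defs
  imports "HOL-Analysis.Analysis"
begin

text \<open>Matrices are elements of real^'n^'n; the dimension n = CARD('n) is arbitrary.\<close>

definition SL_R :: "(real^'n^'n) set" where
  "SL_R = {A. det A = 1}"

definition SO_R :: "(real^'n^'n) set" where
  "SO_R = {A. orthogonal_matrix A \<and> det A = 1}"

definition SL_Z :: "(real^'n^'n) set" where
  "SL_Z = {A \<in> SL_R. \<forall>i j. A $ i $ j \<in> \<int>}"

definition is_subgroup_SL_Z :: "(real^'n^'n) set \<Rightarrow> bool" where
  "is_subgroup_SL_Z G \<longleftrightarrow> G \<subseteq> SL_Z \<and> mat 1 \<in> G \<and>
     (\<forall>a\<in>G. \<forall>b\<in>G. a ** b \<in> G) \<and> (\<forall>a\<in>G. matrix_inv a \<in> G)"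

text \<open>Finitely many left cosets g G of G in SL_n Z.\<close>
definition finite_index_SL_Z :: "(real^'n^'n) set \<Rightarrow> bool" where
  "finite_index_SL_Z G \<longleftrightarrow> finite {(\<lambda>h. g ** h) ` G | g. g \<in> SL_Z}"

definition torsion_free :: "(real^'n^'n) set \<Rightarrow> bool" where
  "torsion_free G \<longleftrightarrow>
     (\<forall>g\<in>G. \<forall>k::nat. k > 0 \<longrightarrow> (((**) g) ^^ k) (mat 1) = mat 1 \<longrightarrow> g = mat 1)"

text \<open>The class [x] of x in M_Gamma = SO_n \ SL_n R / Gamma (a double coset).\<close>
definition cls :: "(real^'n^'n) set \<Rightarrow> real^'n^'n \<Rightarrow> (real^'n^'n) set" where
  "cls G x = {k ** x ** g | k g. k \<in> SO_R \<and> g \<in> G}"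

text \<open>Quotient topology induced by a map f from a space X.\<close>
definition quotient_topology :: "'a topology \<Rightarrow> ('a \<Rightarrow> 'b) \<Rightarrow> 'b topology" where
  "quotient_topology X f =
     topology (\<lambda>U. U \<subseteq> f ` topspace X \<and> openin X {x \<in> topspace X. f x \<in> U})"

text \<open>M_Gamma with the quotient topology from SL_n R.\<close>
definition M_top :: "(real^'n^'n) set \<Rightarrow> (real^'n^'n) set topology" where
  "M_top G = quotient_topology (top_of_set SL_R) (cls G)"

end

theory Submission
  imports Defs
begin


lemma istopology_quotient:
  "istopology (\<lambda>U. U \<subseteq> f ` topspace X \<and> openin X {x \<in> topspace X. f x \<in> U})"
  unfolding istopology_def
proof (intro conjI; intro allI impI)
  fix S T assume S: "S \<subseteq> f ` topspace X \<and> openin X {x \<in> topspace X. f x \<in> S}"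
    and T: "T \<subseteq> f ` topspace X \<and> openin X {x \<in> topspace X. f x \<in> T}"
  have "{x \<in> topspace X. f x \<in> S \<inter> T} = {x \<in> topspace X. f x \<in> S} \<inter> {x \<in> topspace X. f x \<in> T}" by auto
  then show "S \<inter> T \<subseteq> f ` topspace X \<and> openin X {x \<in> topspace X. f x \<in> S \<inter> T}"
    using S T by (auto simp del: Collect_conj_eq)
next
  fix K assume K: "\<forall>S\<in>K. S \<subseteq> f ` topspace X \<and> openin X {x \<in> topspace X. f x \<in> S}"
  have "{x \<in> topspace X. f x \<in> \<Union>K} = (\<Union>S\<in>K. {x \<in> topspace X. f x \<in> S})" by auto
  then show "\<Union>K \<subseteq> f ` topspace X \<and> openin X {x \<in> topspace X. f x \<in> \<Union>K}"
    using K by auto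
qed

lemma openin_quotient:
  "openin (quotient_topology X f) U \<longleftrightarrow> U \<subseteq> f ` topspace X \<and> openin X {x \<in> topspace X. f x \<in> U}"
  unfolding quotient_topology_def by (simp add: topology_inverse'[OF istopology_quotient])

lemma topspace_quotient: "topspace (quotient_topology X f) = f ` topspace X"
proof -
  have "openin (quotient_topology X f) (f ` topspace X)"
  proof -
    have "{x \<in> topspace X. f x \<in> f ` topspace X} = topspace X" by auto
    then show ?thesis unfolding openin_quotient by simp
  qed
  then have "f ` topspace X \<subseteq> topspace (quotient_topology X f)" by (rule openin_subset)
  moreover have "topspace (quotient_topology X f) \<subseteq> f ` topspace X"
    using openin_topspace[of "quotient_topology X f"] unfolding openin_quotient by blast
  ultimately show ?thesis by blast
qed

lemma closedin_quotient:
  "closedin (quotient_topology X f) F \<longleftrightarrow> F \<subseteq> f ` topspace X \<and> closedin X {x \<in> topspace X. f x \<in> F}"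
proof -
  have eq: "{x \<in> topspace X. f x \<in> f ` topspace X - F} = topspace X - {x \<in> topspace X. f x \<in> F}" by auto
  have "closedin (quotient_topology X f) F \<longleftrightarrow> F \<subseteq> f ` topspace X \<and> openin (quotient_topology X f) (f ` topspace X - F)"
    unfolding closedin_def topspace_quotient ..
  also have "\<dots> \<longleftrightarrow> F \<subseteq> f ` topspace X \<and> openin X (topspace X - {x \<in> topspace X. f x \<in> F})"
    unfolding openin_quotient eq by blast
  also have "\<dots> \<longleftrightarrow> F \<subseteq> f ` topspace X \<and> closedin X {x \<in> topspace X. f x \<in> F}"
    unfolding closedin_def by blast
  finally show ?thesis .
qed

lemma continuous_map_quotient: "continuous_map X (quotient_topology X f) f"
  unfolding continuous_map_def topspace_quotient openin_quotient by auto

lemma det1_inv: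
  fixes A :: "real^'n^'n"
  assumes "det A = 1"
  shows "A ** matrix_inv A = mat 1" "matrix_inv A ** A = mat 1"
proof -
  have "invertible A" by (simp add: invertible_det_nz assms)
  then have "\<exists>A'. A ** A' = mat 1 \<and> A' ** A = mat 1" unfolding invertible_def by blast
  then have "A ** matrix_inv A = mat 1 \<and> matrix_inv A ** A = mat 1"
    unfolding matrix_inv_def by (rule someI_ex)
  then show "A ** matrix_inv A = mat 1" "matrix_inv A ** A = mat 1" by auto
qed

lemma SO_mul: "a \<in> SO_R \<Longrightarrow> b \<in> SO_R \<Longrightarrow> a ** b \<in> (SO_R :: (real^'n^'n) set)"
  by (simp add: SO_R_def orthogonal_matrix_mul det_mul)

lemma SO_transpose: "a \<in> SO_R \<Longrightarrow> transpose a \<in> (SO_R :: (real^'n^'n) set)"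
  by (simp add: SO_R_def)

lemma SO_id: "mat 1 \<in> (SO_R :: (real^'n^'n) set)"
  by (simp add: SO_R_def orthogonal_matrix_id)

lemma SO_tinv: "a \<in> (SO_R :: (real^'n^'n) set) \<Longrightarrow> transpose a ** a = mat 1 \<and> a ** transpose a = mat 1"
  by (simp add: SO_R_def orthogonal_matrix_def)

lemma SO_det: "a \<in> (SO_R :: (real^'n^'n) set) \<Longrightarrow> det a = 1"
  by (simp add: SO_R_def)

lemma subgroup_det: "is_subgroup_SL_Z \<Gamma> \<Longrightarrow> g \<in> \<Gamma> \<Longrightarrow> det (g::real^'n^'n) = 1"
  by (auto simp: is_subgroup_SL_Z_def SL_Z_def SL_R_def)

lemma subgroup_inv:
  assumes "is_subgroup_SL_Z \<Gamma>" "g \<in> \<Gamma>"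
  shows "matrix_inv g \<in> \<Gamma>" "g ** matrix_inv g = mat 1" "matrix_inv g ** (g::real^'n^'n) = mat 1"
  using assms det1_inv[OF subgroup_det[OF assms]] by (auto simp: is_subgroup_SL_Z_def)

lemma subgroup_mul: "is_subgroup_SL_Z \<Gamma> \<Longrightarrow> a \<in> \<Gamma> \<Longrightarrow> b \<in> \<Gamma> \<Longrightarrow> a ** b \<in> \<Gamma>"
  by (auto simp: is_subgroup_SL_Z_def)

lemma subgroup_id: "is_subgroup_SL_Z \<Gamma> \<Longrightarrow> mat 1 \<in> \<Gamma>"
  by (auto simp: is_subgroup_SL_Z_def)

lemma cls_mem: "z \<in> cls G x \<longleftrightarrow> (\<exists>k g. k \<in> SO_R \<and> g \<in> G \<and> z = k ** x ** g)"
  by (auto simp: cls_def)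

lemma cls_self: "is_subgroup_SL_Z \<Gamma> \<Longrightarrow> x \<in> cls \<Gamma> x"
  unfolding cls_mem by (rule exI[of _ "mat 1"], rule exI[of _ "mat 1"]) (auto simp: SO_id subgroup_id)

lemma cls_eq:
  assumes G: "is_subgroup_SL_Z \<Gamma>" and k: "k \<in> SO_R" and g: "g \<in> \<Gamma>"
  shows "cls \<Gamma> (k ** x ** g) = cls \<Gamma> x"
proof
  show "cls \<Gamma> (k ** x ** g) \<subseteq> cls \<Gamma> x"
  proof
    fix z assume "z \<in> cls \<Gamma> (k ** x ** g)"
    then obtain k' g' where "k' \<in> SO_R" "g' \<in> \<Gamma>" "z = k' ** (k ** x ** g) ** g'"
      unfolding cls_mem by blast
    moreover have "k' ** (k ** x ** g) ** g' = (k' ** k) ** x ** (g ** g')"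
      by (simp add: matrix_mul_assoc)
    ultimately show "z \<in> cls \<Gamma> x" unfolding cls_mem
      using SO_mul subgroup_mul[OF G] k g by blast
  qed
next
  show "cls \<Gamma> x \<subseteq> cls \<Gamma> (k ** x ** g)"
  proof
    fix z assume "z \<in> cls \<Gamma> x"
    then obtain k' g' where k': "k' \<in> SO_R" and g': "g' \<in> \<Gamma>" and z: "z = k' ** x ** g'"
      unfolding cls_mem by blast
    have "(k' ** transpose k) ** (k ** x ** g) ** (matrix_inv g ** g') = k' ** (transpose k ** k) ** x ** (g ** matrix_inv g) ** g'"
      by (simp add: matrix_mul_assoc)
    also have "\<dots> = z" using SO_tinv[OF k] subgroup_inv[OF G g] z by simp
    finally have e: "z = (k' ** transpose k) ** (k ** x ** g) ** (matrix_inv g ** g')" by simp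
    have "k' ** transpose k \<in> SO_R" using SO_mul[OF k' SO_transpose[OF k]] .
    moreover have "matrix_inv g ** g' \<in> \<Gamma>" using subgroup_mul[OF G subgroup_inv(1)[OF G g] g'] .
    ultimately show "z \<in> cls \<Gamma> (k ** x ** g)" unfolding cls_mem using e by blast
  qed
qed

lemma cls_eqD:
  assumes "is_subgroup_SL_Z \<Gamma>" "cls \<Gamma> z = cls \<Gamma> w"
  shows "\<exists>k g. k \<in> SO_R \<and> g \<in> \<Gamma> \<and> z = k ** w ** g"
proof -
  have "z \<in> cls \<Gamma> w" using cls_self[OF assms(1), of z] assms(2) by simp
  then show ?thesis unfolding cls_mem by blast
qed

lemma continuous_on_det [continuous_intros]:
  fixes f :: "'a::topological_space \<Rightarrow> real^'n^'n"
  assumes "continuous_on S f"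
  shows "continuous_on S (\<lambda>x. det (f x))"
  unfolding det_def by (intro continuous_intros assms)

lemma continuous_on_matrix_mul [continuous_intros]:
  fixes f :: "'a::topological_space \<Rightarrow> real^'m^'n" and g :: "'a \<Rightarrow> real^'k^'m"
  assumes "continuous_on S f" "continuous_on S g"
  shows "continuous_on S (\<lambda>x. f x ** g x)"
  unfolding matrix_matrix_mult_def by (intro continuous_intros assms)

definition msolve :: "real^'n^'n \<Rightarrow> real^'n^'n \<Rightarrow> real^'n^'n" where
  "msolve X Y = (\<chi> i k. det (\<chi> r s. if s = i then Y$r$k else X$r$s))"

lemma continuous_on_msolve [continuous_intros]:
  fixes f g :: "'a::topological_space \<Rightarrow> real^'n^'n"
  assumes "continuous_on S f" "continuous_on S g"
  shows "continuous_on S (\<lambda>x. msolve (f x) (g x))"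
proof -
  have "continuous_on S (\<lambda>x. if s = i then g x $ r $ k else f x $ r $ s)" for i k r s
    by (cases "s = i") (auto intro!: continuous_intros assms)
  then show ?thesis unfolding msolve_def by (intro continuous_intros assms)
qed

lemma msolve:
  fixes X Y Z :: "real^'n^'n"
  assumes "det X = 1" "X ** Z = Y"
  shows "Z = msolve X Y"
proof -
  have "Z $ i $ k = msolve X Y $ i $ k" for i k
  proof -
    have "X *v (\<chi> j. Z$j$k) = (\<chi> r. Y$r$k)"
      using assms(2) by (auto simp: vec_eq_iff matrix_vector_mult_def matrix_matrix_mult_def)
    then have "(\<chi> j. Z$j$k) = (\<chi> kk. det(\<chi> i j. if j=kk then (\<chi> r. Y$r$k)$i else X$i$j) / det X)"
      using cramer[of X] assms(1) by simp
    moreover have "(\<lambda>ia. \<chi> j. if j = i then (\<chi> r. Y$r$k)$ia else X$ia$j) = (\<lambda>r. \<chi> s. if s = i then Y$r$k else X$r$s)"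
      by (rule ext, rule arg_cong[where f=vec_lambda], rule ext) (simp only: vec_lambda_beta)
    ultimately show ?thesis using assms(1) by (simp add: vec_eq_iff msolve_def)
  qed
  then show ?thesis by (simp add: vec_eq_iff)
qed

lemma continuous_on_matrix_inv:
  fixes f :: "'a::topological_space \<Rightarrow> real^'n^'n"
  assumes "continuous_on S f" "\<And>x. x \<in> S \<Longrightarrow> det (f x) = 1"
  shows "continuous_on S (\<lambda>x. matrix_inv (f x))"
proof -
  have "continuous_on S (\<lambda>x. msolve (f x) (mat 1))" by (intro continuous_intros assms)
  moreover have "x \<in> S \<Longrightarrow> matrix_inv (f x) = msolve (f x) (mat 1)" for x
    using msolve det1_inv assms(2) by blast
  ultimately show ?thesis using continuous_on_cong by force
qed



definition GLp :: "(real^'n^'n) set" where "GLp = {A. det A > 0}"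

lemma path_component_mult_left:
  fixes A B C :: "real^'n^'n"
  assumes "path_component GLp A B" "det C > 0"
  shows "path_component GLp (C ** A) (C ** B)"
proof -
  obtain g where g: "path g" "path_image g \<subseteq> GLp" "pathstart g = A" "pathfinish g = B"
    using assms(1) unfolding path_component_def by blast
  have "path (\<lambda>t. C ** g t)" using g(1) unfolding path_def by (intro continuous_intros) auto
  moreover have "path_image (\<lambda>t. C ** g t) \<subseteq> GLp"
    using g(2) assms(2) by (auto simp: path_image_def GLp_def det_mul)
  ultimately show ?thesis using g(3,4) unfolding path_component_def pathstart_def pathfinish_def by blast
qed

lemma path_component_mult_right:
  fixes A B C :: "real^'n^'n"
  assumes "path_component GLp A B" "det C > 0"
  shows "path_component GLp (A ** C) (B ** C)"
proof -
  obtain g where g: "path g" "path_image g \<subseteq> GLp" "pathstart g = A" "pathfinish g = B"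
    using assms(1) unfolding path_component_def by blast
  have "path (\<lambda>t. g t ** C)" using g(1) unfolding path_def by (intro continuous_intros) auto
  moreover have "path_image (\<lambda>t. g t ** C) \<subseteq> GLp"
    using g(2) assms(2) by (auto simp: path_image_def GLp_def det_mul)
  ultimately show ?thesis using g(3,4) unfolding path_component_def pathstart_def pathfinish_def by blast
qed

definition elem :: "'n \<Rightarrow> real^'n \<Rightarrow> real^'n^'n" where
  "elem p u = mat 1 + (\<chi> i k. if i = p then u$k else 0)"

lemma sum_axis_span:
  fixes x :: "real^'n"
  assumes "x $ p = 0"
  shows "x \<in> vec.span {row j (mat 1 :: real^'n^'n) |j. j \<noteq> p}"
proof -
  have rowI: "row j (mat 1 :: real^'n^'n) = axis j 1" for j
    by (simp add: row_def mat_def axis_def vec_eq_iff)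
  have "x = (\<Sum>j\<in>UNIV - {p}. x$j *s row j (mat 1 :: real^'n^'n))"
  proof (rule vec_eq_iff[THEN iffD2], rule allI)
    fix i
    have "(\<Sum>j\<in>UNIV - {p}. x$j *s row j (mat 1 :: real^'n^'n)) $ i = (\<Sum>j\<in>UNIV - {p}. x$j * (if i = j then 1 else 0))"
      by (simp add: rowI axis_def sum_component)
    also have "\<dots> = (\<Sum>j\<in>UNIV - {p}. if i = j then x$j else 0)"
      by (rule sum.cong) auto
    also have "\<dots> = x $ i" using assms by (cases "i = p") (auto simp: sum.delta)
    finally show "x $ i = (\<Sum>j\<in>UNIV - {p}. x$j *s row j (mat 1 :: real^'n^'n)) $ i" by simp
  qed
  also have "\<dots> \<in> vec.span {row j (mat 1 :: real^'n^'n) |j. j \<noteq> p}"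
    by (intro vec.span_sum vec.span_scale vec.span_base) auto
  finally show ?thesis .
qed

lemma det_elem:
  assumes "u $ p = 0"
  shows "det (elem p u) = 1"
proof -
  have e: "elem p u = (\<chi> k. if k = p then row p (mat 1) + u else row k (mat 1))"
    by (simp add: elem_def vec_eq_iff row_def mat_def)
  show ?thesis unfolding e
    by (subst det_row_span[OF sum_axis_span[OF assms]]) simp
qed

lemma elem_scale: "elem p (s *s u) $ i $ k = (if i = k then 1 else 0) + (if i = p then s * u$k else 0)"
  by (simp add: elem_def mat_def)

lemma elem_scale_eq: "elem p (t *s u) = mat 1 + t *\<^sub>R (\<chi> i k. if i = p then u$k else 0)"
  by (simp add: elem_def vec_eq_iff)

lemma continuous_on_elem [continuous_intros]: "continuous_on S (\<lambda>t::real. elem p (t *s u))"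
  unfolding elem_scale_eq by (intro continuous_intros)

lemma path_elem_left:
  fixes B :: "real^'n^'n"
  assumes "u $ p = 0" "det B > 0"
  shows "path_component GLp B (elem p u ** B)"
proof -
  let ?g = "\<lambda>t::real. elem p (t *s u) ** B"
  have "continuous_on {0..1} ?g"
    by (intro continuous_intros)
  moreover have "det (?g t) = det B" for t
    using assms by (simp add: det_mul det_elem)
  moreover have "elem p (0 *s u) = mat 1"
    by (simp add: elem_def vec_eq_iff)
  ultimately show ?thesis using assms
    unfolding path_component_def path_def path_image_def pathstart_def pathfinish_def GLp_def
    by (intro exI[of _ ?g]) auto
qed

lemma path_elemT_left:
  fixes B :: "real^'n^'n"
  assumes "u $ p = 0" "det B > 0"
  shows "path_component GLp B (transpose (elem p u) ** B)"
proof -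
  let ?g = "\<lambda>t::real. transpose (elem p (t *s u)) ** B"
  have "continuous_on {0..1} ?g"
    unfolding transpose_def by (intro continuous_intros)
  moreover have "det (?g t) = det B" for t
    using assms by (simp add: det_mul det_elem)
  moreover have "elem p (0 *s u) = mat 1"
    by (simp add: elem_def vec_eq_iff)
  ultimately show ?thesis using assms
    unfolding path_component_def path_def path_image_def pathstart_def pathfinish_def GLp_def
    by (intro exI[of _ ?g]) auto
qed

lemma path_elem_right:
  fixes B :: "real^'n^'n"
  assumes "u $ p = 0" "det B > 0"
  shows "path_component GLp B (B ** elem p u)"
proof -
  let ?g = "\<lambda>t::real. B ** elem p (t *s u)"
  have "continuous_on {0..1} ?g"
    by (intro continuous_intros)
  moreover have "det (?g t) = det B" for t
    using assms by (simp add: det_mul det_elem)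
  moreover have "elem p (0 *s u) = mat 1"
    by (simp add: elem_def vec_eq_iff)
  ultimately show ?thesis using assms
    unfolding path_component_def path_def path_image_def pathstart_def pathfinish_def GLp_def
    by (intro exI[of _ ?g]) auto
qed

lemma elem_nth: "elem p u $ i $ k = (if i = k then 1 else 0) + (if i = p then u$k else 0)"
  by (simp add: elem_def mat_def)

lemma elem_left: "(elem p u ** B) $ i $ m = B$i$m + (if i = p then (\<Sum>r\<in>UNIV. u$r * B$r$m) else 0)"
proof -
  have "(elem p u ** B) $ i $ m = (\<Sum>k\<in>UNIV. (if i = k then B$k$m else 0) + (if i = p then u$k * B$k$m else 0))"
    unfolding matrix_matrix_mult_def elem_nth by (simp add: distrib_right, intro sum.cong) auto
  also have "\<dots> = B$i$m + (if i = p then (\<Sum>r\<in>UNIV. u$r * B$r$m) else 0)"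
    by (simp add: sum.distrib sum.delta)
  finally show ?thesis .
qed

lemma elemT_left: "(transpose (elem p u) ** B) $ i $ m = B$i$m + u$i * B$p$m"
proof -
  have "(transpose (elem p u) ** B) $ i $ m = (\<Sum>k\<in>UNIV. (if i = k then B$k$m else 0) + (if k = p then u$i * B$k$m else 0))"
    unfolding matrix_matrix_mult_def transpose_def elem_nth by (simp add: distrib_right, intro sum.cong) auto
  also have "\<dots> = B$i$m + u$i * B$p$m"
    by (simp add: sum.distrib sum.delta sum.delta')
  finally show ?thesis .
qed

lemma elem_right: "(B ** elem p u) $ i $ m = B$i$m + B$i$p * u$m"
proof -
  have "(B ** elem p u) $ i $ m = (\<Sum>k\<in>UNIV. (if k = m then B$i$k else 0) + (if k = p then B$i$k * u$m else 0))"
    unfolding matrix_matrix_mult_def elem_nth by (simp add: distrib_left, intro sum.cong) auto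
  also have "\<dots> = B$i$m + B$i$p * u$m"
    by (simp add: sum.distrib sum.delta)
  finally show ?thesis .
qed

definition idrows :: "'n set \<Rightarrow> real^'n^'n \<Rightarrow> bool" where
  "idrows S B \<longleftrightarrow> (\<forall>i m. i \<notin> S \<longrightarrow> B$i$m = (if i = m then 1 else 0))"

lemma det_idrow:
  fixes A :: "real^'n^'n"
  assumes "\<And>i m. i \<noteq> j \<Longrightarrow> A$i$m = (if i = m then 1 else 0)"
  shows "det A = A$j$j"
proof -
  define A' where "A' = (\<chi> k. if k = j then A$j$j *s row j (mat 1 :: real^'n^'n) else row k (mat 1))"
  define w :: "real^'n" where "w = (\<chi> m. if m = j then 0 else A$j$m)"
  have rows: "{row l A' |l. l \<noteq> j} = {row l (mat 1 :: real^'n^'n) |l. l \<noteq> j}"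
    by (auto simp: A'_def row_def)
  have wspan: "w \<in> vec.span {row l A' |l. l \<noteq> j}"
    unfolding rows by (rule sum_axis_span) (simp add: w_def)
  have eA: "A = (\<chi> k. if k = j then row j A' + w else row k A')"
    using assms by (auto simp: vec_eq_iff A'_def w_def row_def mat_def)
  have "det A = det A'" unfolding eA by (rule det_row_span[OF wspan])
  also have "\<dots> = A$j$j * det (\<chi> k. if k = j then row j (mat 1 :: real^'n^'n) else row k (mat 1))"
    unfolding A'_def by (rule det_row_mul)
  also have "(\<chi> k. if k = j then row j (mat 1 :: real^'n^'n) else row k (mat 1)) = mat 1"
    by (simp add: vec_eq_iff row_def)
  finally show ?thesis by simp
qed

lemma pivot_aux:
  fixes B :: "real^'n^'n"
  assumes "det B > 0" "idrows S B" "j \<in> S" "l \<noteq> j" "B$l$j \<noteq> 0"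
  shows "\<exists>B1. path_component GLp B B1 \<and> det B1 = det B \<and> idrows S B1 \<and> B1$j$j = 1"
proof -
  define c where "c = (1 - B$j$j) / B$l$j"
  define u where "u = c *s (axis l 1 :: real^'n)"
  have uj: "u $ j = 0" using assms(4) by (simp add: u_def axis_def)
  have su: "(\<Sum>r\<in>UNIV. u$r * B$r$m) = c * B$l$m" for m
  proof -
    have "u$r * B$r$m = (if r = l then c * B$l$m else 0)" for r by (simp add: u_def axis_def)
    then show ?thesis by (simp add: sum.delta')
  qed
  let ?B1 = "elem j u ** B"
  have "path_component GLp B ?B1" by (rule path_elem_left[OF uj assms(1)])
  moreover have "det ?B1 = det B" by (simp add: det_mul det_elem[OF uj])
  moreover have "idrows S ?B1" using assms(2,3) unfolding idrows_def elem_left by auto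
  moreover have "?B1 $ j $ j = 1" using assms(5) unfolding elem_left su by (simp add: c_def)
  ultimately show ?thesis by blast
qed

lemma pivot:
  fixes B :: "real^'n^'n"
  assumes "det B > 0" "idrows S B" "j \<in> S" "k \<in> S" "k \<noteq> j"
  shows "\<exists>B1. path_component GLp B B1 \<and> det B1 = det B \<and> idrows S B1 \<and> B1$j$j = 1"
proof (cases "\<exists>l. l \<noteq> j \<and> B$l$j \<noteq> 0")
  case True
  then show ?thesis using pivot_aux assms by blast
next
  case False
  have "B$j$j \<noteq> 0"
  proof
    assume "B$j$j = 0"
    then have "column j B = 0" using False by (auto simp: column_def vec_eq_iff)
    then have "det B = 0" by (rule det_zero_column)
    then show False using assms(1) by simp
  qed
  define u where "u = (axis j 1 :: real^'n)"
  have uk: "u $ k = 0" using assms(5) by (simp add: u_def axis_def)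
  have su: "(\<Sum>r\<in>UNIV. u$r * B$r$m) = B$j$m" for m
  proof -
    have "u$r * B$r$m = (if r = j then B$j$m else 0)" for r by (simp add: u_def axis_def)
    then show ?thesis by (simp add: sum.delta')
  qed
  let ?B' = "elem k u ** B"
  have p1: "path_component GLp B ?B'" by (rule path_elem_left[OF uk assms(1)])
  have d1: "det ?B' = det B" by (simp add: det_mul det_elem[OF uk])
  have i1: "idrows S ?B'" using assms(2,4) unfolding idrows_def elem_left by auto
  have "?B' $ k $ j \<noteq> 0" using False assms(5) \<open>B$j$j \<noteq> 0\<close> unfolding elem_left su by auto
  then obtain B1 where "path_component GLp ?B' B1 \<and> det B1 = det ?B' \<and> idrows S B1 \<and> B1$j$j = 1"
    using pivot_aux[OF _ i1 assms(3) assms(5)] d1 assms(1) by auto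
  then show ?thesis using p1 d1 path_component_trans by metis
qed

lemma elim_GL:
  fixes S :: "'n::finite set"
  assumes "finite S"
  shows "\<forall>B::real^'n^'n. det B > 0 \<and> idrows S B \<longrightarrow> path_component GLp B (mat 1)"
  using assms
proof (induction S)
  case empty
  show ?case
  proof (intro allI impI)
    fix B :: "real^'n^'n" assume "det B > 0 \<and> idrows {} B"
    then have "B = mat 1" "B \<in> GLp" by (auto simp: idrows_def vec_eq_iff mat_def GLp_def)
    then show "path_component GLp B (mat 1)" using path_component_refl by metis
  qed
next
  case (insert j S')
  show ?case
  proof (intro allI impI)
    fix B :: "real^'n^'n" assume B: "det B > 0 \<and> idrows (insert j S') B"
    show "path_component GLp B (mat 1)"
    proof (cases "S' = {}")
      case True
      have rowsB: "i \<noteq> j \<Longrightarrow> B$i$m = (if i = m then 1 else 0)" for i m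
        using B True by (auto simp: idrows_def)
      have bj: "B$j$j > 0" using B det_idrow[OF rowsB] by simp
      let ?g = "\<lambda>t::real. (1 - t) *\<^sub>R B + t *\<^sub>R mat 1"
      have "continuous_on {0..1} ?g" by (intro continuous_intros)
      moreover have "det (?g t) > 0" if "t \<in> {0..1}" for t
      proof -
        have "det (?g t) = ?g t $ j $ j"
          by (rule det_idrow) (simp add: rowsB mat_def)
        also have "\<dots> = (1 - t) * B$j$j + t" by (simp add: mat_def)
        also have "\<dots> > 0"
        proof (cases "t = 1")
          case False
          then have "1 - t > 0" using that by auto
          then have "(1 - t) * B$j$j > 0" using bj by simp
          then show ?thesis using that by simp
        qed simp
        finally show ?thesis .
      qed
      ultimately show ?thesis
        unfolding path_component_def path_def path_image_def pathstart_def pathfinish_def GLp_def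
        by (intro exI[of _ ?g]) auto
    next
      case False
      then obtain k where k: "k \<in> S'" by blast
      have kj: "k \<noteq> j" using k insert.hyps by auto
      obtain B1 where B1: "path_component GLp B B1" "det B1 = det B" "idrows (insert j S') B1" "B1$j$j = 1"
        using pivot[of B "insert j S'" j k] B k kj by auto
      define c :: "real^'n" where "c = (\<chi> i. if i = j then 0 else B1$i$j)"
      have cj: "(-c) $ j = 0" by (simp add: c_def)
      define B2 where "B2 = transpose (elem j (-c)) ** B1"
      have p2: "path_component GLp B1 B2" unfolding B2_def
        by (rule path_elemT_left[OF cj]) (simp add: B1 B)
      have d2: "det B2 = det B" by (simp add: B2_def det_mul det_elem[OF cj] B1)
      have B2e: "B2$i$m = B1$i$m - c$i * B1$j$m" for i m
        unfolding B2_def elemT_left by simp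
      define r :: "real^'n" where "r = (\<chi> m. if m = j then 0 else B2$j$m)"
      have rj: "(-r) $ j = 0" by (simp add: r_def)
      define B3 where "B3 = B2 ** elem j (-r)"
      have p3: "path_component GLp B2 B3" unfolding B3_def
        by (rule path_elem_right[OF rj]) (simp add: d2 B)
      have d3: "det B3 = det B" by (simp add: B3_def det_mul det_elem[OF rj] d2)
      have B3e: "B3$i$m = B2$i$m - B2$i$j * r$m" for i m
        unfolding B3_def elem_right by simp
      have B2jj: "B2$j$j = 1" using B2e[of j j] B1(4) by (simp add: c_def)
      have B2ij: "i \<noteq> j \<Longrightarrow> B2$i$j = 0" for i
        using B2e[of i j] B1(4) by (simp add: c_def)
      have "idrows S' B3"
        unfolding idrows_def
      proof (intro allI impI)
        fix i m assume i: "i \<notin> S'"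
        show "B3$i$m = (if i = m then 1 else 0)"
        proof (cases "i = j")
          case True
          then show ?thesis using B3e[of j m] B2jj B2e[of j m] B1(4) by (cases "m = j") (simp_all add: r_def c_def)
        next
          case False
          then have "i \<notin> insert j S'" using i by simp
          then have "B1$i$m = (if i = m then 1 else 0)" "B1$i$j = 0"
            using B1(3) False unfolding idrows_def by auto
          then show ?thesis using B3e[of i m] B2ij[OF False] B2e[of i m] False by (simp add: c_def)
        qed
      qed
      then have "path_component GLp B3 (mat 1)" using insert.IH d3 B by auto
      then show ?thesis using B1(1) p2 p3 path_component_trans by metis
    qed
  qed
qed

lemma GLp_connected:
  fixes B :: "real^'n^'n"
  assumes "det B > 0"
  shows "path_component GLp B (mat 1)"
  using elim_GL[of "UNIV :: 'n set"] assms by (simp add: idrows_def)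

lemma det_scaleR_mat:
  fixes A :: "real^'n^'n"
  shows "det (c *\<^sub>R A) = c ^ CARD('n) * det A"
proof -
  have "c *\<^sub>R A = mat c ** A"
  proof -
    have "(mat c ** A) $ i $ m = c * A$i$m" for i m
    proof -
      have "(mat c ** A) $ i $ m = (\<Sum>k\<in>UNIV. if i = k then c * A$k$m else 0)"
        unfolding matrix_matrix_mult_def mat_def
        by (subst vec_lambda_beta)+ (intro sum.cong, auto)
      then show ?thesis by (simp add: sum.delta)
    qed
    then show ?thesis by (simp add: vec_eq_iff)
  qed
  moreover have "det (mat c :: real^'n^'n) = c ^ CARD('n)"
    by (subst det_diagonal) (auto simp: mat_def)
  ultimately show ?thesis by (simp add: det_mul)
qed

lemma SL_path:
  fixes B :: "real^'n^'n"
  assumes "det B = 1"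
  shows "\<exists>h. continuous_on {0..1::real} h \<and> (\<forall>t\<in>{0..1}. det (h t) = 1) \<and> h 0 = mat 1 \<and> h 1 = B"
proof -
  have "path_component GLp (mat 1) B"
    using GLp_connected[of B] assms path_component_sym by auto
  then obtain g where g: "path g" "path_image g \<subseteq> GLp" "pathstart g = mat 1" "pathfinish g = B"
    unfolding path_component_def by blast
  have gpos: "t \<in> {0..1} \<Longrightarrow> det (g t) > 0" for t
    using g(2) unfolding path_image_def GLp_def by blast
  define n where "n = real CARD('n)"
  have n: "n > 0" by (simp add: n_def)
  let ?h = "\<lambda>t. (det (g t) powr (- 1 / n)) *\<^sub>R g t"
  have "continuous_on {0..1} ?h"
    using g(1) gpos unfolding path_def by (intro continuous_intros) force+
  moreover have "det (?h t) = 1" if "t \<in> {0..1}" for t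
  proof -
    let ?d = "det (g t)"
    have d: "?d > 0" using gpos that .
    have "(?d powr (- 1 / n)) ^ CARD('n) = (?d powr (- 1 / n)) powr n"
      unfolding n_def by (rule powr_realpow[symmetric]) (use d in simp)
    also have "\<dots> = ?d powr (-1)" using n by (simp add: powr_powr)
    also have "\<dots> = inverse ?d" using d by (simp add: powr_minus)
    finally show ?thesis using d by (simp add: det_scaleR_mat)
  qed
  moreover have "?h 0 = mat 1" "?h 1 = B"
    using g(3,4) assms by (auto simp: pathstart_def pathfinish_def)
  ultimately show ?thesis by (intro exI[of _ ?h]) blast
qed



lemma finite_int_bounded:
  fixes T :: "(real^'n^'n) set"
  assumes "bounded T" "\<And>A i j. A \<in> T \<Longrightarrow> A$i$j \<in> \<int>"
  shows "finite T"
proof -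
  obtain r where r: "\<And>A. A \<in> T \<Longrightarrow> norm A \<le> r"
    using assms(1) bounded_iff by blast
  define Bi where "Bi = real_of_int ` {-ceiling r..ceiling r}"
  have fBi: "finite Bi" unfolding Bi_def by simp
  define F where "F = {f :: 'n \<times> 'n \<Rightarrow> real. \<forall>x. (x \<in> UNIV \<longrightarrow> f x \<in> Bi) \<and> (x \<notin> UNIV \<longrightarrow> f x = 0)}"
  have fF: "finite F" unfolding F_def by (rule finite_set_of_finite_funs) (auto simp: fBi)
  let ?phi = "\<lambda>A::real^'n^'n. \<lambda>(i,j). A$i$j"
  have "?phi ` T \<subseteq> F"
  proof
    fix f assume "f \<in> ?phi ` T"
    then obtain A where A: "A \<in> T" "f = ?phi A" by blast
    have "A$i$j \<in> Bi" for i j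
    proof -
      have "\<bar>A$i$j\<bar> \<le> norm (A$i)" by (rule component_le_norm_cart)
      also have "\<dots> \<le> norm A" by (rule Finite_Cartesian_Product.norm_nth_le)
      also have "\<dots> \<le> r" using r A(1) .
      finally have le: "\<bar>A$i$j\<bar> \<le> r" .
      obtain m where m: "A$i$j = of_int m" using assms(2)[OF A(1)] Ints_cases by metis
      have "\<bar>of_int m\<bar> \<le> r" using le m by simp
      then have "m \<in> {-ceiling r..ceiling r}"
        by (auto simp: abs_le_iff) (linarith+)
      then show ?thesis unfolding Bi_def using m by blast
    qed
    then show "f \<in> F" unfolding F_def A(2) by auto
  qed
  then have "finite (?phi ` T)" using fF finite_subset by blast
  moreover have "inj_on ?phi T"
  proof (rule inj_onI)
    fix A B assume "?phi A = ?phi B"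
    then have "A$i$j = B$i$j" for i j by (metis (mono_tags) case_prod_conv)
    then show "A = B" by (simp add: vec_eq_iff)
  qed
  ultimately show ?thesis using finite_imageD by blast
qed

lemma closed_by_cballs:
  fixes S :: "'a::real_normed_vector set"
  assumes "\<And>R. closed (S \<inter> cball 0 R)"
  shows "closed S"
proof -
  have "open (- S)"
    unfolding open_dist
  proof (intro ballI)
    fix x assume x: "x \<in> - S"
    have "open (- (S \<inter> cball 0 (norm x + 1)))" using assms[of "norm x + 1"] by (simp only: open_Compl)
    moreover have "x \<in> - (S \<inter> cball 0 (norm x + 1))" using x by auto
    ultimately obtain e where e: "e > 0" "\<And>y. dist y x < e \<Longrightarrow> y \<in> - (S \<inter> cball 0 (norm x + 1))"
      unfolding open_dist by blast
    show "\<exists>e>0. \<forall>y. dist y x < e \<longrightarrow> y \<in> - S"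
    proof (intro exI[of _ "min e 1"] conjI allI impI)
      fix y assume y: "dist y x < min e 1"
      then have "norm y \<le> norm x + 1"
        using norm_triangle_ineq2[of y x] by (simp add: dist_norm)
      then show "y \<in> - S" using e(2)[of y] y by auto
    qed (use e in auto)
  qed
  then show ?thesis by (simp add: closed_def)
qed

lemma closed_SL: "closed (SL_R :: (real^'n^'n) set)"
proof -
  have "closed {A::real^'n^'n. det A = 1}"
    by (rule closed_Collect_eq) (auto intro!: continuous_intros)
  then show ?thesis unfolding SL_R_def .
qed

lemma compact_SO: "compact (SO_R :: (real^'n^'n) set)"
proof (rule compact_eq_bounded_closed[THEN iffD2], rule conjI)
  show "bounded (SO_R :: (real^'n^'n) set)"
    unfolding bounded_iff
  proof (intro exI[of _ "real CARD('n)"] ballI)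
    fix A :: "real^'n^'n" assume "A \<in> SO_R"
    then have "norm (row i A) = 1" for i
      by (simp add: SO_R_def orthogonal_matrix_orthonormal_rows)
    then have "norm (A$i) = 1" for i by (simp add: row_def)
    have "norm A \<le> (\<Sum>i\<in>UNIV. norm (A$i))"
      unfolding norm_vec_def by (rule L2_set_le_sum) auto
    then show "norm A \<le> real CARD('n)" using \<open>\<And>i. norm (A$i) = 1\<close> by simp
  qed
  have "closed {A::real^'n^'n. transpose A ** A = mat 1 \<and> det A = 1}"
    unfolding transpose_def
    by (intro closed_Collect_conj closed_Collect_eq continuous_intros)
  then show "closed (SO_R :: (real^'n^'n) set)"
    by (simp add: SO_R_def orthogonal_matrix)
qed

lemma det_matrix_inv: "det (A::real^'n^'n) = 1 \<Longrightarrow> det (matrix_inv A) = 1"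
  using det1_inv(1)[of A] det_mul[of A "matrix_inv A"] by simp



lemma cls_cont: "continuous_map (top_of_set SL_R) (M_top \<Gamma>) (cls \<Gamma>)"
  unfolding M_top_def by (rule continuous_map_quotient)

lemma topspace_M: "topspace (M_top \<Gamma>) = cls \<Gamma> ` SL_R"
  unfolding M_top_def topspace_quotient by simp

lemma closedin_M: "closedin (M_top \<Gamma>) F \<longleftrightarrow> F \<subseteq> cls \<Gamma> ` SL_R \<and> closedin (top_of_set SL_R) {x \<in> SL_R. cls \<Gamma> x \<in> F}"
  unfolding M_top_def closedin_quotient by simp

lemma compactin_cls_img:
  assumes "compact A" "A \<subseteq> SL_R"
  shows "compactin (M_top \<Gamma>) (cls \<Gamma> ` A)"
proof (rule image_compactin[OF _ cls_cont])
  show "compactin (top_of_set SL_R) A" using assms by (simp add: compactin_subtopology)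
qed

lemma proper_pre:
  assumes "proper_map (top_of_set N) (M_top \<Gamma>) (cls \<Gamma>)" "compactin (M_top \<Gamma>) K"
  shows "compact {x \<in> N. cls \<Gamma> x \<in> K}"
proof -
  have "compactin (top_of_set N) {x. x \<in> topspace (top_of_set N) \<and> cls \<Gamma> x \<in> K}"
    by (rule compactin_proper_map_preimage[OF assms])
  then show ?thesis by (simp add: compactin_subtopology)
qed

lemma subgroup_fin:
  assumes "is_subgroup_SL_Z \<Gamma>" "bounded T"
  shows "finite (\<Gamma> \<inter> T)"
proof (rule finite_int_bounded)
  show "bounded (\<Gamma> \<inter> T)" using assms(2) bounded_subset by blast
  show "A $ i $ j \<in> \<int>" if "A \<in> \<Gamma> \<inter> T" for A i j
    using that assms(1) by (auto simp: is_subgroup_SL_Z_def SL_Z_def)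
qed

lemma SL_mul: "det (a::real^'n^'n) = 1 \<Longrightarrow> det b = 1 \<Longrightarrow> det (a ** b) = 1"
  by (simp add: det_mul)

lemma main_closed:
  fixes \<Gamma> N :: "(real^'n^'n) set" and h :: "real \<Rightarrow> real^'n^'n"
  assumes G: "is_subgroup_SL_Z \<Gamma>" and NS: "N \<subseteq> SL_R"
    and pp: "proper_map (top_of_set N) (M_top \<Gamma>) (cls \<Gamma>)"
    and hc: "continuous_on {0..1} h" and hd: "\<And>t. t \<in> {0..1} \<Longrightarrow> det (h t) = 1"
    and C: "closedin (top_of_set (N \<times> {0..1})) C"
  shows "closedin (M_top \<Gamma>) ((\<lambda>(x,t). cls \<Gamma> (h t ** x)) ` C)"
proof -
  let ?H = "\<lambda>(x,t). cls \<Gamma> (h t ** x)"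
  obtain T where T: "closed T" "C = T \<inter> (N \<times> {0..1})"
    using C closedin_closed by (metis inf_commute)
  have CN: "C \<subseteq> N \<times> {0..1}" using T by auto
  have detN: "x \<in> N \<Longrightarrow> det x = 1" for x using NS by (auto simp: SL_R_def)
  have sub: "?H ` C \<subseteq> cls \<Gamma> ` SL_R"
  proof
    fix y assume "y \<in> ?H ` C"
    then obtain x t where "(x,t) \<in> C" "y = cls \<Gamma> (h t ** x)" by auto
    moreover have "h t ** x \<in> SL_R" using calculation CN hd detN by (auto simp: SL_R_def det_mul)
    ultimately show "y \<in> cls \<Gamma> ` SL_R" by blast
  qed
  define S where "S = {z \<in> SL_R. cls \<Gamma> z \<in> ?H ` C}"
  have "closed (S \<inter> cball 0 R)" for R
  proof -
    define Bd where "Bd = cball 0 R \<inter> (SL_R :: (real^'n^'n) set)"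
    have cBd: "compact Bd" unfolding Bd_def by (rule compact_Int_closed[OF compact_cball closed_SL])
    define A where "A = (\<lambda>(t,k,z). matrix_inv (h t) ** (transpose k ** z)) ` ({0..1::real} \<times> (SO_R \<times> Bd))"
    have cA: "compact A" unfolding A_def
    proof (rule compact_continuous_image)
      show "compact ({0..1::real} \<times> (SO_R \<times> Bd))"
        by (intro compact_Times compact_SO cBd compact_Icc)
      have "continuous_on ({0..1::real} \<times> (SO_R \<times> Bd)) (\<lambda>p. matrix_inv (h (fst p)))"
        by (rule continuous_on_matrix_inv)
          (auto intro!: continuous_on_compose2[OF hc] continuous_intros simp: hd)
      then show "continuous_on ({0..1::real} \<times> (SO_R \<times> Bd)) (\<lambda>(t,k,z). matrix_inv (h t) ** (transpose k ** z))"
        unfolding case_prod_unfold transpose_def by (intro continuous_intros) auto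
    qed
    have ASL: "A \<subseteq> SL_R"
      unfolding A_def Bd_def using hd by (auto simp: SL_R_def SO_R_def det_mul det_matrix_inv)
    define P where "P = {x \<in> N. cls \<Gamma> x \<in> cls \<Gamma> ` A}"
    have cP: "compact P" unfolding P_def by (rule proper_pre[OF pp compactin_cls_img[OF cA ASL]])
    have PN: "P \<subseteq> N" unfolding P_def by auto
    define Fin where "Fin = \<Gamma> \<inter> (\<lambda>(x,a). msolve x a) ` (P \<times> A)"
    have fFin: "finite Fin" unfolding Fin_def
    proof (rule subgroup_fin[OF G], rule compact_imp_bounded, rule compact_continuous_image)
      show "compact (P \<times> A)" using cP cA by (rule compact_Times)
      show "continuous_on (P \<times> A) (\<lambda>(x, a). msolve x a)"
        unfolding case_prod_unfold by (intro continuous_intros)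
    qed
    define C' where "C' = T \<inter> (P \<times> {0..1})"
    have cC': "compact C'" unfolding C'_def
      by (subst inf_commute, rule compact_Int_closed[OF compact_Times[OF cP compact_Icc] T(1)])
    have C'C: "C' \<subseteq> C" using T PN by (auto simp: C'_def)
    define U where "U = (\<lambda>(k,p,g). k ** (h (snd p) ** fst p) ** g) ` (SO_R \<times> (C' \<times> Fin))"
    have cU: "compact U" unfolding U_def
    proof (rule compact_continuous_image)
      show "compact (SO_R \<times> (C' \<times> Fin))"
        by (intro compact_Times compact_SO cC' finite_imp_compact fFin)
      have "C' \<subseteq> N \<times> {0..1}" using C'C CN by auto
      then have "continuous_on (SO_R \<times> (C' \<times> Fin)) (\<lambda>q. h (snd (fst (snd q))))"
        by (intro continuous_on_compose2[OF hc] continuous_intros) auto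
      then show "continuous_on (SO_R \<times> (C' \<times> Fin)) (\<lambda>(k,p,g). k ** (h (snd p) ** fst p) ** g)"
        unfolding case_prod_unfold by (intro continuous_intros) auto
    qed
    have "S \<inter> cball 0 R = U \<inter> cball 0 R"
    proof
      show "S \<inter> cball 0 R \<subseteq> U \<inter> cball 0 R"
      proof
        fix z assume z: "z \<in> S \<inter> cball 0 R"
        then have zSL: "z \<in> SL_R" and zBd: "z \<in> Bd" by (auto simp: S_def Bd_def)
        from z obtain x t where xt: "(x,t) \<in> C" "cls \<Gamma> z = cls \<Gamma> (h t ** x)" by (auto simp: S_def)
        then obtain k g where kg: "k \<in> SO_R" "g \<in> \<Gamma>" "z = k ** (h t ** x) ** g"
          using cls_eqD[OF G] by blast
        have xN: "x \<in> N" and t01: "t \<in> {0..1}" using xt CN by auto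
        have "transpose k ** z = (transpose k ** k) ** (h t ** x) ** g"
          using kg(3) by (simp add: matrix_mul_assoc)
        also have "\<dots> = h t ** (x ** g)" using SO_tinv[OF kg(1)] by (simp add: matrix_mul_assoc)
        finally have "matrix_inv (h t) ** (transpose k ** z) = (matrix_inv (h t) ** h t) ** (x ** g)"
          by (simp add: matrix_mul_assoc)
        also have "\<dots> = x ** g" using det1_inv(2)[OF hd[OF t01]] by simp
        finally have xgA: "x ** g \<in> A" unfolding A_def using t01 kg(1) zBd
          by (auto intro!: image_eqI[where x="(t,k,z)"])
        have "cls \<Gamma> x = cls \<Gamma> (mat 1 ** x ** g)" using cls_eq[OF G SO_id kg(2)] by simp
        then have "cls \<Gamma> x \<in> cls \<Gamma> ` A" using xgA by auto
        then have xP: "x \<in> P" using xN by (simp add: P_def)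
        have "g = msolve x (x ** g)" by (rule msolve) (use xN detN in auto)
        then have gF: "g \<in> Fin" unfolding Fin_def using kg(2) xP xgA by force
        have "(x,t) \<in> C'" using xt(1) xP t01 T by (auto simp: C'_def)
        then have "z \<in> U" unfolding U_def using kg gF
          by (auto intro!: image_eqI[where x="(k,(x,t),g)"])
        then show "z \<in> U \<inter> cball 0 R" using z by auto
      qed
      show "U \<inter> cball 0 R \<subseteq> S \<inter> cball 0 R"
      proof
        fix z assume z: "z \<in> U \<inter> cball 0 R"
        then obtain k x t g where kg: "k \<in> SO_R" "(x,t) \<in> C'" "g \<in> Fin" "z = k ** (h t ** x) ** g"
          unfolding U_def by auto
        have gG: "g \<in> \<Gamma>" using kg(3) by (simp add: Fin_def)
        have xtC: "(x,t) \<in> C" using kg(2) C'C by auto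
        then have "x \<in> N" "t \<in> {0..1}" using CN by auto
        then have "det z = 1" using kg(4) SO_det[OF kg(1)] subgroup_det[OF G gG] hd detN
          by (simp add: det_mul)
        moreover have "cls \<Gamma> z = cls \<Gamma> (h t ** x)" using kg(4) cls_eq[OF G kg(1) gG] by simp
        ultimately show "z \<in> S \<inter> cball 0 R" using z xtC
          by (auto simp: S_def SL_R_def intro!: image_eqI[where x="(x,t)"])
      qed
    qed
    then show ?thesis using compact_imp_closed[OF cU] by auto
  qed
  then have "closed S" by (rule closed_by_cballs)
  moreover have "S \<subseteq> SL_R" by (auto simp: S_def)
  ultimately have "closedin (top_of_set SL_R) S" by (simp add: closed_subset)
  then show ?thesis using sub unfolding closedin_M S_def by simp
qed

lemma main_fiber:
  fixes \<Gamma> N :: "(real^'n^'n) set" and h :: "real \<Rightarrow> real^'n^'n"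
  assumes G: "is_subgroup_SL_Z \<Gamma>" and NS: "N \<subseteq> SL_R"
    and pp: "proper_map (top_of_set N) (M_top \<Gamma>) (cls \<Gamma>)"
    and hc: "continuous_on {0..1} h" and hd: "\<And>t. t \<in> {0..1} \<Longrightarrow> det (h t) = 1"
    and y0: "y0 \<in> SL_R"
  shows "compact {p \<in> N \<times> {0..1}. (\<lambda>(x,t). cls \<Gamma> (h t ** x)) p = cls \<Gamma> y0}"
proof -
  have detN: "x \<in> N \<Longrightarrow> det x = 1" for x using NS by (auto simp: SL_R_def)
  have dy0: "det y0 = 1" using y0 by (simp add: SL_R_def)
  define A where "A = (\<lambda>(t,k). matrix_inv (h t) ** (k ** y0)) ` ({0..1::real} \<times> SO_R)"
  have cA: "compact A" unfolding A_def
  proof (rule compact_continuous_image)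
    show "compact ({0..1::real} \<times> SO_R)" by (intro compact_Times compact_SO compact_Icc)
    have "continuous_on ({0..1::real} \<times> (SO_R :: (real^'n^'n) set)) (\<lambda>p. matrix_inv (h (fst p)))"
      by (rule continuous_on_matrix_inv)
        (auto intro!: continuous_on_compose2[OF hc] continuous_intros simp: hd)
    then show "continuous_on ({0..1::real} \<times> SO_R) (\<lambda>(t,k). matrix_inv (h t) ** (k ** y0))"
      unfolding case_prod_unfold by (intro continuous_intros) auto
  qed
  have ASL: "A \<subseteq> SL_R"
    unfolding A_def using hd dy0 by (auto simp: SL_R_def SO_R_def det_mul det_matrix_inv)
  define P where "P = {x \<in> N. cls \<Gamma> x \<in> cls \<Gamma> ` A}"
  have cP: "compact P" unfolding P_def by (rule proper_pre[OF pp compactin_cls_img[OF cA ASL]])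
  have PN: "P \<subseteq> N" unfolding P_def by auto
  define Fin where "Fin = \<Gamma> \<inter> (\<lambda>(k,x,t). msolve (k ** y0) (h t ** x)) ` (SO_R \<times> (P \<times> {0..1}))"
  have fFin: "finite Fin" unfolding Fin_def
  proof (rule subgroup_fin[OF G], rule compact_imp_bounded, rule compact_continuous_image)
    show "compact (SO_R \<times> (P \<times> {0..1::real}))" by (intro compact_Times compact_SO cP compact_Icc)
    have "continuous_on (SO_R \<times> (P \<times> {0..1::real})) (\<lambda>q. h (snd (snd q)))"
      by (intro continuous_on_compose2[OF hc] continuous_intros) auto
    then show "continuous_on (SO_R \<times> (P \<times> {0..1})) (\<lambda>(k,x,t). msolve (k ** y0) (h t ** x))"
      unfolding case_prod_unfold by (intro continuous_intros) auto
  qed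
  define V where "V = (\<lambda>(k,g). k ** y0 ** g) ` (SO_R \<times> Fin)"
  have cV: "compact V" unfolding V_def
  proof (rule compact_continuous_image)
    show "compact (SO_R \<times> Fin)" by (rule compact_Times[OF compact_SO finite_imp_compact[OF fFin]])
    show "continuous_on (SO_R \<times> Fin) (\<lambda>(k,g). k ** y0 ** g)"
      unfolding case_prod_unfold by (intro continuous_intros)
  qed
  define m where "m = (\<lambda>p::(real^'n^'n) \<times> real. h (snd p) ** fst p)"
  have cm: "continuous_on (P \<times> {0..1}) m"
  proof -
    have "continuous_on (P \<times> {0..1::real}) (\<lambda>q. h (snd q))"
      by (intro continuous_on_compose2[OF hc] continuous_intros) auto
    then show ?thesis unfolding m_def by (intro continuous_intros) auto
  qed
  have eq: "{p \<in> N \<times> {0..1}. (\<lambda>(x,t). cls \<Gamma> (h t ** x)) p = cls \<Gamma> y0} = (P \<times> {0..1}) \<inter> m -` V"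
  proof
    show "{p \<in> N \<times> {0..1}. (\<lambda>(x,t). cls \<Gamma> (h t ** x)) p = cls \<Gamma> y0} \<subseteq> (P \<times> {0..1}) \<inter> m -` V"
    proof
      fix p assume p: "p \<in> {p \<in> N \<times> {0..1}. (\<lambda>(x,t). cls \<Gamma> (h t ** x)) p = cls \<Gamma> y0}"
      obtain x t where pxt: "p = (x,t)" by (cases p)
      have xN: "x \<in> N" and t01: "t \<in> {0..1}" and ce: "cls \<Gamma> (h t ** x) = cls \<Gamma> y0"
        using p pxt by auto
      obtain k g where kg: "k \<in> SO_R" "g \<in> \<Gamma>" "h t ** x = k ** y0 ** g"
        using cls_eqD[OF G ce] by blast
      have "x = (matrix_inv (h t) ** h t) ** x" using det1_inv(2)[OF hd[OF t01]] by simp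
      also have "\<dots> = matrix_inv (h t) ** (h t ** x)" by (simp add: matrix_mul_assoc)
      also have "\<dots> = matrix_inv (h t) ** (k ** y0) ** g" using kg(3) by (simp add: matrix_mul_assoc)
      finally have xe: "x = matrix_inv (h t) ** (k ** y0) ** g" .
      have aA: "matrix_inv (h t) ** (k ** y0) \<in> A" unfolding A_def using t01 kg(1) by auto
      have "cls \<Gamma> x = cls \<Gamma> (mat 1 ** (matrix_inv (h t) ** (k ** y0)) ** g)"
        using xe by simp
      also have "\<dots> = cls \<Gamma> (matrix_inv (h t) ** (k ** y0))" by (rule cls_eq[OF G SO_id kg(2)])
      finally have xP: "x \<in> P" using xN aA by (auto simp: P_def)
      have "g = msolve (k ** y0) (h t ** x)"
        by (rule msolve) (use kg SO_det dy0 in \<open>auto simp: det_mul matrix_mul_assoc\<close>)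
      then have gF: "g \<in> Fin" unfolding Fin_def using kg(1,2) xP t01
        by (auto intro!: image_eqI[where x="(k,x,t)"])
      have "m p \<in> V" unfolding V_def m_def pxt using kg gF
        by (auto intro!: image_eqI[where x="(k,g)"])
      then show "p \<in> (P \<times> {0..1}) \<inter> m -` V" using xP t01 pxt by auto
    qed
    show "(P \<times> {0..1}) \<inter> m -` V \<subseteq> {p \<in> N \<times> {0..1}. (\<lambda>(x,t). cls \<Gamma> (h t ** x)) p = cls \<Gamma> y0}"
    proof
      fix p assume p: "p \<in> (P \<times> {0..1}) \<inter> m -` V"
      obtain x t where pxt: "p = (x,t)" by (cases p)
      have xP: "x \<in> P" and t01: "t \<in> {0..1}" and mV: "h t ** x \<in> V" using p pxt by (auto simp: m_def)
      obtain k g where kg: "k \<in> SO_R" "g \<in> Fin" "h t ** x = k ** y0 ** g"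
        using mV unfolding V_def by auto
      have "g \<in> \<Gamma>" using kg(2) by (simp add: Fin_def)
      then have "cls \<Gamma> (h t ** x) = cls \<Gamma> y0" using kg(3) cls_eq[OF G kg(1)] by simp
      then show "p \<in> {p \<in> N \<times> {0..1}. (\<lambda>(x,t). cls \<Gamma> (h t ** x)) p = cls \<Gamma> y0}"
        using xP PN t01 pxt by auto
    qed
  qed
  have "closed ((P \<times> {0..1}) \<inter> m -` V)"
    by (rule continuous_closed_preimage[OF cm compact_imp_closed compact_imp_closed])
      (intro compact_Times cP compact_Icc, rule cV)
  then have "compact ((P \<times> {0..1}) \<inter> m -` V)"
    using compact_Int_closed[OF compact_Times[OF cP compact_Icc[of 0 1]]] by (metis Int_absorb1 inf.cobounded1 inf_commute)
  then show ?thesis using eq by simp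
qed

theorem mainTheorem4:
  fixes \<Gamma> :: "(real^'n^'n) set" and N :: "(real^'n^'n) set" and B :: "real^'n^'n"
  assumes "is_subgroup_SL_Z \<Gamma>"
    and "finite_index_SL_Z \<Gamma>"
    and "torsion_free \<Gamma>"
    and "N \<subseteq> SL_R"
    and "proper_map (top_of_set N) (M_top \<Gamma>) (cls \<Gamma>)"
    and "B \<in> SL_R"
  shows "\<exists>H. continuous_map (prod_topology (top_of_set N) (top_of_set {0..1::real})) (M_top \<Gamma>) H
           \<and> proper_map (prod_topology (top_of_set N) (top_of_set {0..1::real})) (M_top \<Gamma>) H
           \<and> (\<forall>x\<in>N. H (x, 0) = cls \<Gamma> x \<and> H (x, 1) = cls \<Gamma> (B ** x))"
proof -
  note G = assms(1) and NS = assms(4) and pp = assms(5)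
  obtain h :: "real \<Rightarrow> real^'n^'n" where hc: "continuous_on {0..1} h"
    and hd: "\<forall>t\<in>{0..1}. det (h t) = 1" and h0: "h 0 = mat 1" and h1: "h 1 = B"
    using SL_path[of B] assms(6) by (auto simp: SL_R_def)
  have hd': "\<And>t. t \<in> {0..1} \<Longrightarrow> det (h t) = 1" using hd by blast
  have detN: "x \<in> N \<Longrightarrow> det x = 1" for x using NS by (auto simp: SL_R_def)
  define H where "H = (\<lambda>(x,t). cls \<Gamma> (h t ** x))"
  have X: "prod_topology (top_of_set N) (top_of_set {0..1::real}) = top_of_set (N \<times> {0..1})"
    by simp
  define m where "m = (\<lambda>p::(real^'n^'n) \<times> real. h (snd p) ** fst p)"
  have cm: "continuous_on (N \<times> {0..1}) m"
  proof -
    have "continuous_on (N \<times> {0..1::real}) (\<lambda>q. h (snd q))"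
      by (intro continuous_on_compose2[OF hc] continuous_intros) auto
    then show ?thesis unfolding m_def by (intro continuous_intros) auto
  qed
  have mSL: "m ` (N \<times> {0..1}) \<subseteq> SL_R"
    using detN hd' by (auto simp: m_def SL_R_def det_mul)
  have "continuous_map (top_of_set (N \<times> {0..1})) (top_of_set SL_R) m"
    using cm mSL by (auto simp: continuous_map_subtopology_eu)
  then have "continuous_map (top_of_set (N \<times> {0..1})) (M_top \<Gamma>) (cls \<Gamma> \<circ> m)"
    using cls_cont by (rule continuous_map_compose)
  moreover have "cls \<Gamma> \<circ> m = H" by (auto simp: H_def m_def)
  ultimately have cont: "continuous_map (top_of_set (N \<times> {0..1})) (M_top \<Gamma>) H" by simp
  have cmap: "closed_map (top_of_set (N \<times> {0..1})) (M_top \<Gamma>) H"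
    unfolding closed_map_def H_def
  proof (intro allI impI)
    fix U assume U: "closedin (top_of_set (N \<times> {0..1::real})) U"
    show "closedin (M_top \<Gamma>) ((\<lambda>(x,t). cls \<Gamma> (h t ** x)) ` U)"
      using main_closed[OF G NS pp hc hd' U] by simp
  qed
  have fib: "compactin (top_of_set (N \<times> {0..1})) {p \<in> topspace (top_of_set (N \<times> {0..1})). H p = y}"
    if yM: "y \<in> topspace (M_top \<Gamma>)" for y
  proof -
    obtain y0 where y0: "y0 \<in> SL_R" "y = cls \<Gamma> y0" using yM unfolding topspace_M by blast
    have "compact {p \<in> N \<times> {0..1}. H p = y}"
      unfolding H_def y0(2) by (rule main_fiber[OF G NS pp hc hd' y0(1)])
    moreover have "topspace (top_of_set (N \<times> {0..1::real})) = N \<times> {0..1}" by simp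
    ultimately show ?thesis unfolding compactin_subtopology by auto
  qed
  have "proper_map (top_of_set (N \<times> {0..1})) (M_top \<Gamma>) H"
    unfolding proper_map_def using cmap fib by blast
  moreover have "\<forall>x\<in>N. H (x, 0) = cls \<Gamma> x \<and> H (x, 1) = cls \<Gamma> (B ** x)"
    by (simp add: H_def h0 h1)
  ultimately show ?thesis unfolding X using cont by blast
qed


end
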